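(* Let $A,B$ be $n\times n$ matrices and, for integers $i,j\ge0$, let $\mathrm{sym}_{ij}(A,B)$ denote the sum of all (distinct) words in $A$ and $B$ containing exactly $i$ letters $A$ and $j$ letters $B$ (so $\mathrm{sym}_{00}=I$). (a) $[\mathrm{sym}_{i,j+1}(A,B),A]+[\mathrm{sym}_{i+1,j}(A,B),B]=0$ for all $i,j\ge0$. (b) If $A=S$ is symmetric and $B=N$ is skew-symmetric, then $\mathrm{sym}_{ij}(S,N)$ is symmetric if $j$ is even and skew-symmetric if $j$ is odd. (c) Each $\mathrm{sym}_{n-\ell,\ell}(A,B)$, $\ell=0,\dots,n$, is a linear combination of symmetrizers $\mathrm{sym}_{r,s}(A,B)$ with $r+s<n$. (d) For generic pairs $(A,B)$ (i.e., for an open dense set of pairs), the matrices $\mathrm{sym}_{k-\ell,\ell}(A,B)$, $0\le\ell\le k\le n-1$, are linearly independent. The same holds for generic pairs with $A=S$ real symmetric and $B=N$ real skew-symmetric. *)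

theory Defs
  imports "HOL-Analysis.Analysis"
begin

text \<open>A word in the letters A and B is encoded as a bool list: False = letter A, True = letter B.
  The matrix of a word is the ordered product of its letters (empty word = identity).\<close>
definition word_mat :: "'a::field^'n^'n \<Rightarrow> 'a^'n^'n \<Rightarrow> bool list \<Rightarrow> 'a^'n^'n" where
  "word_mat A B w = foldr (\<lambda>b M. (if b then B else A) ** M) w (mat 1)"

definition words :: "nat \<Rightarrow> nat \<Rightarrow> bool list set" where
  "words i j = {w. length w = i + j \<and> count_list w True = j}"

definition symz :: "nat \<Rightarrow> nat \<Rightarrow> 'a::field^'n^'n \<Rightarrow> 'a^'n^'n \<Rightarrow> 'a^'n^'n" where
  "symz i j A B = (\<Sum>w\<in>words i j. word_mat A B w)"

definition commutator :: "'a::field^'n^'n \<Rightarrow> 'a^'n^'n \<Rightarrow> 'a^'n^'n" where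
  "commutator X Y = X ** Y - Y ** X"

definition sym_skew_pairs :: "((real^'n^'n) \<times> (real^'n^'n)) set" where
  "sym_skew_pairs = {(S, N). transpose S = S \<and> transpose N = - N}"

definition lin_indep_family :: "'i set \<Rightarrow> ('i \<Rightarrow> 'v::real_vector) \<Rightarrow> bool" where
  "lin_indep_family I f \<longleftrightarrow>
     (\<forall>c. (\<Sum>i\<in>I. c i *\<^sub>R f i) = 0 \<longrightarrow> (\<forall>i\<in>I. c i = 0))"

text \<open>Index set {(k,l) | 0 \<le> l \<le> k \<le> n-1}, the family being (k,l) \<mapsto> sym_{k-l,l}.\<close>
definition low_index :: "nat \<Rightarrow> (nat \<times> nat) set" where
  "low_index n = {(k, l). l \<le> k \<and> k \<le> n - 1}"

end

theory Submission
  imports Defs "Jordan_Normal_Form.Char_Poly"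
begin

abbreviation I1 :: "'a::field^'n^'n" where "I1 \<equiv> Finite_Cartesian_Product.mat 1"

lemma word_mat_Nil[simp]: "word_mat A B [] = I1"
  by (simp add: word_mat_def)
lemma word_mat_Cons[simp]: "word_mat A B (b # w) = (if b then B else A) ** word_mat A B w"
  by (simp add: word_mat_def)
lemma word_mat_append: "word_mat A B (u @ v) = word_mat A B u ** word_mat A B v"
  by (induction u) (auto simp: matrix_mul_assoc)
lemma word_mat_snoc: "word_mat A B (w @ [b]) = word_mat A B w ** (if b then B else A)"
  by (simp add: word_mat_append)

lemma finite_words[simp]: "finite (words i j)"
proof -
  have "words i j \<subseteq> {w. set w \<subseteq> UNIV \<and> length w = i + j}" by (auto simp: words_def)
  moreover have "finite {w::bool list. set w \<subseteq> UNIV \<and> length w = i + j}"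
    by (rule finite_lists_length_eq) simp
  ultimately show ?thesis by (rule finite_subset)
qed

lemma words_00: "words 0 0 = {[]}" by (auto simp: words_def)

lemma words_Cons: "words i j = (if i = 0 \<and> j = 0 then {[]} else
   (if i > 0 then Cons False ` words (i-1) j else {}) \<union> (if j > 0 then Cons True ` words i (j-1) else {}))"
proof (cases "i = 0 \<and> j = 0")
  case True then show ?thesis by (simp add: words_00)
next
  case False
  have "w \<in> words i j \<longleftrightarrow> w \<in> (if i > 0 then Cons False ` words (i-1) j else {}) \<union> (if j > 0 then Cons True ` words i (j-1) else {})" for w
  proof (cases w)
    case Nil then show ?thesis using False by (auto simp: words_def)
  next
    case (Cons b v) then show ?thesis using False count_le_length[of v True] by (cases b) (auto simp: words_def)
  qed
  then have "words i j = (if i > 0 then Cons False ` words (i-1) j else {}) \<union> (if j > 0 then Cons True ` words i (j-1) else {})" by blast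
  then show ?thesis using False by simp
qed

lemma words_snoc: "words i j = (if i = 0 \<and> j = 0 then {[]} else
   (if i > 0 then (\<lambda>w. w @ [False]) ` words (i-1) j else {}) \<union> (if j > 0 then (\<lambda>w. w @ [True]) ` words i (j-1) else {}))"
proof (cases "i = 0 \<and> j = 0")
  case True then show ?thesis by (simp add: words_00)
next
  case False
  have "w \<in> words i j \<longleftrightarrow> w \<in> (if i > 0 then (\<lambda>w. w @ [False]) ` words (i-1) j else {}) \<union> (if j > 0 then (\<lambda>w. w @ [True]) ` words i (j-1) else {})" for w
  proof (cases w rule: rev_cases)
    case Nil then show ?thesis using False by (auto simp: words_def)
  next
    case (snoc v b) then show ?thesis using False count_le_length[of v True] by (cases b) (auto simp: words_def)
  qed
  then have "words i j = (if i > 0 then (\<lambda>w. w @ [False]) ` words (i-1) j else {}) \<union> (if j > 0 then (\<lambda>w. w @ [True]) ` words i (j-1) else {})" by blast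
  then show ?thesis using False by simp
qed

lemma sum_words_Cons: "(\<Sum>w\<in>words i j. g w) = (if i = 0 \<and> j = 0 then g [] else
   (if i > 0 then (\<Sum>w\<in>words (i-1) j. g (False # w)) else 0) + (if j > 0 then (\<Sum>w\<in>words i (j-1). g (True # w)) else 0))"
proof -
  have d: "(if i > 0 then Cons False ` words (i-1) j else {}) \<inter> (if j > 0 then Cons True ` words i (j-1) else {}) = {}"
    by auto
  show ?thesis
    apply (subst words_Cons)
    apply (cases "i = 0 \<and> j = 0")
     apply simp
    apply (simp only: if_False)
    apply (subst sum.union_disjoint)
       apply simp apply simp apply (rule d)
    apply (auto simp: sum.reindex)
    done
qed

lemma sum_words_snoc: "(\<Sum>w\<in>words i j. g w) = (if i = 0 \<and> j = 0 then g [] else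
   (if i > 0 then (\<Sum>w\<in>words (i-1) j. g (w @ [False])) else 0) + (if j > 0 then (\<Sum>w\<in>words i (j-1). g (w @ [True])) else 0))"
proof -
  have d: "(if i > 0 then (\<lambda>w. w @ [False]) ` words (i-1) j else {}) \<inter> (if j > 0 then (\<lambda>w. w @ [True]) ` words i (j-1) else {}) = {}"
    by auto
  show ?thesis
    apply (subst words_snoc)
    apply (cases "i = 0 \<and> j = 0")
     apply simp
    apply (simp only: if_False)
    apply (subst sum.union_disjoint)
       apply simp apply simp apply (rule d)
    apply (auto simp: sum.reindex inj_on_def)
    done
qed

lemma matrix_mul_sum_right: "A ** (\<Sum>x\<in>S. f x) = (\<Sum>x\<in>S. A ** f x)"
  by (induction S rule: infinite_finite_induct) (auto simp: matrix_add_ldistrib)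
lemma matrix_add_rdistrib': "(B + C) ** A = B ** A + C ** (A::'a::semiring_1^'p^'n)"
  by (vector matrix_matrix_mult_def sum.distrib[symmetric] field_simps)
lemma matrix_mul_sum_left: "(\<Sum>x\<in>S. f x) ** A = (\<Sum>x\<in>S. f x ** A)"
  by (induction S rule: infinite_finite_induct) (auto simp: matrix_add_rdistrib')

lemma symz_left: "symz i j A B = (if i = 0 \<and> j = 0 then I1 else
   (if i > 0 then A ** symz (i-1) j A B else 0) + (if j > 0 then B ** symz i (j-1) A B else 0))"
  unfolding symz_def by (subst sum_words_Cons) (simp add: matrix_mul_sum_right)

lemma symz_right: "symz i j A B = (if i = 0 \<and> j = 0 then I1 else
   (if i > 0 then symz (i-1) j A B ** A else 0) + (if j > 0 then symz i (j-1) A B ** B else 0))"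
  unfolding symz_def by (subst sum_words_snoc) (simp add: matrix_mul_sum_left word_mat_snoc)

lemma part_a: "commutator (symz i (j+1) A B) A + commutator (symz (i+1) j A B) B = 0"
proof -
  have "symz (i+1) (j+1) A B = A ** symz i (j+1) A B + B ** symz (i+1) j A B"
    by (subst symz_left) simp
  moreover have "symz (i+1) (j+1) A B = symz i (j+1) A B ** A + symz (i+1) j A B ** B"
    by (subst symz_right) simp
  ultimately show ?thesis unfolding commutator_def by (simp add: algebra_simps)
qed


lemma transpose_add': "transpose (A + B) = transpose A + transpose (B::'a::comm_semiring_1^'n^'m)"
  by (vector transpose_def)
lemma transpose_zero': "transpose (0::'a::comm_semiring_1^'n^'m) = 0"
  by (vector transpose_def)
lemma transpose_sum: "transpose (\<Sum>x\<in>S. f x) = (\<Sum>x\<in>S. transpose (f x :: 'a::comm_semiring_1^'n^'m))"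
  by (induction S rule: infinite_finite_induct) (auto simp: transpose_add' transpose_zero')

lemma transpose_word_mat:
  fixes S N :: "real^'n^'n"
  assumes "transpose S = S" "transpose N = - N"
  shows "transpose (word_mat S N w) = (-1)^(count_list w True) *\<^sub>R word_mat S N (rev w)"
proof (induction w)
  case Nil then show ?case by (simp add: transpose_mat)
next
  case (Cons b w)
  have "transpose (word_mat S N (b # w)) = transpose (word_mat S N w) ** transpose (if b then N else S)"
    by (simp add: matrix_transpose_mul)
  also have "\<dots> = ((-1)^(count_list w True) *\<^sub>R word_mat S N (rev w)) ** ((if b then -1 else 1) *\<^sub>R (if b then N else S))"
    using Cons assms by simp
  also have "\<dots> = (-1)^(count_list (b#w) True) *\<^sub>R word_mat S N (rev (b # w))"
    by (simp add: word_mat_snoc scalar_matrix_assoc matrix_scalar_ac)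
  finally show ?case .
qed

lemma part_b:
  fixes S N :: "real^'n^'n"
  assumes "transpose S = S" "transpose N = - N"
  shows "transpose (symz i j S N) = (if even j then symz i j S N else - symz i j S N)"
proof -
  have bij: "bij_betw rev (words i j) (words i j)"
    by (rule bij_betwI[where g=rev]) (auto simp: words_def)
  have "transpose (symz i j S N) = (\<Sum>w\<in>words i j. (-1)^j *\<^sub>R word_mat S N (rev w))"
    unfolding symz_def transpose_sum
    by (rule sum.cong) (auto simp: transpose_word_mat[OF assms] words_def)
  also have "\<dots> = (-1)^j *\<^sub>R (\<Sum>w\<in>words i j. word_mat S N (rev w))"
    by (simp add: scaleR_sum_right)
  also have "(\<Sum>w\<in>words i j. word_mat S N (rev w)) = symz i j S N"
    unfolding symz_def using sum.reindex_bij_betw[OF bij, of "word_mat S N"] by simp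
  finally show ?thesis by simp
qed


primrec mpow :: "real^'n^'n \<Rightarrow> nat \<Rightarrow> real^'n^'n" where
  "mpow M 0 = I1"
| "mpow M (Suc k) = M ** mpow M k"

lemma mpow_Suc': "mpow M (Suc k) = mpow M k ** M"
proof (induction k)
  case (Suc k)
  have "mpow M (Suc (Suc k)) = M ** (mpow M k ** M)" using Suc by simp
  also have "\<dots> = mpow M (Suc k) ** M" by (simp add: matrix_mul_assoc)
  finally show ?case .
qed simp

lemma expand_pow:
  fixes A B :: "real^'n^'n"
  shows "mpow (s *\<^sub>R A + t *\<^sub>R B) k = (\<Sum>l\<le>k. (s^(k-l) * t^l) *\<^sub>R symz (k-l) l A B)"
proof (induction k)
  case 0 then show ?case by (simp add: symz_def words_00)
next
  case (Suc k)
  let ?c = "\<lambda>l. s^(Suc k - l) * t^l"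
  have "(\<Sum>l\<le>Suc k. ?c l *\<^sub>R symz (Suc k - l) l A B)
      = (\<Sum>l\<le>Suc k. ?c l *\<^sub>R ((if l \<le> k then A ** symz (k-l) l A B else 0) + (if l > 0 then B ** symz (Suc k - l) (l-1) A B else 0)))"
  proof (rule sum.cong[OF refl])
    fix l assume "l \<in> {..Suc k}"
    then have "Suc k - l > 0 \<longleftrightarrow> l \<le> k" "Suc k - l - 1 = k - l" by auto
    then show "?c l *\<^sub>R symz (Suc k - l) l A B = ?c l *\<^sub>R ((if l \<le> k then A ** symz (k-l) l A B else 0) + (if l > 0 then B ** symz (Suc k - l) (l-1) A B else 0))"
      by (subst symz_left) auto
  qed
  also have "\<dots> = (\<Sum>l\<le>Suc k. ?c l *\<^sub>R (if l \<le> k then A ** symz (k-l) l A B else 0))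
                 + (\<Sum>l\<le>Suc k. ?c l *\<^sub>R (if l > 0 then B ** symz (Suc k - l) (l-1) A B else 0))"
    by (simp add: scaleR_add_right sum.distrib)
  also have "(\<Sum>l\<le>Suc k. ?c l *\<^sub>R (if l \<le> k then A ** symz (k-l) l A B else 0))
      = (\<Sum>l\<le>k. ?c l *\<^sub>R (A ** symz (k-l) l A B))"
    by (simp add: sum.atMost_Suc)
  also have "(\<Sum>l\<le>Suc k. ?c l *\<^sub>R (if l > 0 then B ** symz (Suc k - l) (l-1) A B else 0))
      = (\<Sum>l\<le>k. ?c (Suc l) *\<^sub>R (B ** symz (k - l) l A B))"
    by (subst sum.atMost_Suc_shift) simp
  also have "(\<Sum>l\<le>k. ?c l *\<^sub>R (A ** symz (k-l) l A B)) + (\<Sum>l\<le>k. ?c (Suc l) *\<^sub>R (B ** symz (k - l) l A B))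
      = (s *\<^sub>R A + t *\<^sub>R B) ** (\<Sum>l\<le>k. (s^(k-l) * t^l) *\<^sub>R symz (k-l) l A B)"
  proof -
    have e1: "?c l = s * (s^(k-l) * t^l)" if "l \<le> k" for l
      using that by (simp add: Suc_diff_le)
    have e2: "?c (Suc l) = t * (s^(k-l) * t^l)" for l
      by simp
    have h: "(s *\<^sub>R A + t *\<^sub>R B) ** (c *\<^sub>R X) = (s*c) *\<^sub>R (A ** X) + (t*c) *\<^sub>R (B ** X)" for c and X :: "real^'n^'n"
      by (simp add: matrix_add_rdistrib' scalar_matrix_assoc[symmetric] matrix_scalar_ac scaleR_add_right mult.commute)
    have s1: "(\<Sum>l\<le>k. ?c l *\<^sub>R (A ** symz (k-l) l A B)) = (\<Sum>l\<le>k. (s * (s^(k-l) * t^l)) *\<^sub>R (A ** symz (k-l) l A B))"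
      by (rule sum.cong) (auto simp: e1)
    show ?thesis
      by (simp only: s1 e2 matrix_mul_sum_right h sum.distrib)
  qed
  finally show ?case using Suc by simp
qed


definition en :: "nat \<Rightarrow> 'n::finite" where
  "en = (SOME h. bij_betw h {0..<CARD('n)} (UNIV::'n set))"

lemma bij_en: "bij_betw (en::nat \<Rightarrow> 'n::finite) {0..<CARD('n)} UNIV"
proof -
  have "\<exists>h. bij_betw h {0..<card (UNIV::'n set)} (UNIV::'n set)"
    by (rule ex_bij_betw_nat_finite) simp
  then show ?thesis unfolding en_def by (rule someI_ex)
qed

definition ix :: "'n::finite \<Rightarrow> nat" where
  "ix x = inv_into {0..<CARD('n)} en x"

lemma ix_lt[simp]: "ix (x::'n::finite) < CARD('n)"
  using bij_en unfolding ix_def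
  by (metis atLeastLessThan_iff bij_betw_def inv_into_into iso_tuple_UNIV_I)

lemma en_ix[simp]: "en (ix (x::'n::finite)) = x"
  using bij_en unfolding ix_def by (metis bij_betw_inv_into_right iso_tuple_UNIV_I)

lemma ix_en[simp]: "i < CARD('n::finite) \<Longrightarrow> ix (en i :: 'n) = i"
  using bij_en unfolding ix_def by (metis atLeastLessThan_iff bij_betw_inv_into_left zero_le)

lemma ix_inj: "ix (x::'n::finite) = ix y \<longleftrightarrow> x = y"
  by (metis en_ix)

lemma en_inj: "i < CARD('n::finite) \<Longrightarrow> j < CARD('n) \<Longrightarrow> (en i :: 'n) = en j \<longleftrightarrow> i = j"
  by (metis ix_en)

lemma sum_en: "(\<Sum>x\<in>(UNIV::'n::finite set). f x) = (\<Sum>i<CARD('n). f (en i))"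
  using sum.reindex_bij_betw[OF bij_en, of f] by (simp add: atLeast0LessThan)

lemma matrix_sub_ldistrib': "A ** (B - C) = A ** B - A ** (C::'a::ring_1^'p^'n)"
  by (vector matrix_matrix_mult_def sum_subtractf[symmetric] field_simps)

lemma coeff_X_mult: "coeff ([:0,1:] * (p::real poly)) k = (if k = 0 then 0 else coeff p (k-1))"
  by (cases k) (auto simp: coeff_pCons)
lemma coeff_const_mult: "coeff ([:a:] * (p::real poly)) k = a * coeff p k"
  by simp
lemma coeff_CH_entry:
  fixes p :: "real poly"
  shows "coeff ((if i = r then [:0,1:] else 0) * p + [:a:] * p) k
       = (if i = r then (if k = 0 then 0 else coeff p (k-1)) else 0) + a * coeff p k"
  by (cases k) (auto simp: coeff_pCons)

lemma cayley_hamilton_vec: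
  fixes M :: "real^'n^'n"
  shows "\<exists>c. mpow M CARD('n) = (\<Sum>k<CARD('n). c k *\<^sub>R mpow M k)"
proof -
  define n where "n = CARD('n)"
  define Am where "Am = Matrix.mat n n (\<lambda>(i,j). M $ en i $ en j)"
  have Am: "Am \<in> carrier_mat n n" unfolding Am_def by simp
  define C where "C = char_poly_matrix Am"
  have C: "C \<in> carrier_mat n n" unfolding C_def using Am by simp
  define Adj where "Adj = adj_mat C"
  have Adj: "Adj \<in> carrier_mat n n" unfolding Adj_def using adj_mat(1)[OF C] .
  have CA: "C * Adj = Determinant.det C \<cdot>\<^sub>m 1\<^sub>m n" unfolding Adj_def using adj_mat(2)[OF C] .
  define chi where "chi = char_poly Am"
  have chi_det: "chi = Determinant.det C" unfolding chi_def C_def char_poly_def ..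
  have Centry: "C $$ (i,r) = (if i = r then [:0,1:] else 0) + [:- (M $ en i $ en r):]" if "i < n" "r < n" for i r
    using that Am unfolding C_def char_poly_matrix_def Am_def by simp
  have entry: "(\<Sum>r<n. C $$ (i,r) * Adj $$ (r,j)) = (if i = j then chi else 0)" if "i < n" "j < n" for i j
  proof -
    have "(C * Adj) $$ (i,j) = (\<Sum>r<n. C $$ (i,r) * Adj $$ (r,j))"
      using that C Adj by (simp add: scalar_prod_def atLeast0LessThan)
    moreover have "(C * Adj) $$ (i,j) = (if i = j then chi else 0)"
      using that by (simp add: CA chi_det)
    ultimately show ?thesis by simp
  qed
  have centry: "(if k = 0 then 0 else coeff (Adj $$ (i,j)) (k-1)) - (\<Sum>r<n. M $ en i $ en r * coeff (Adj $$ (r,j)) k)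
      = (if i = j then coeff chi k else 0)" if "i < n" "j < n" for i j k
  proof -
    have "coeff (\<Sum>r<n. C $$ (i,r) * Adj $$ (r,j)) k = (if i = j then coeff chi k else 0)"
      using entry[OF that] by simp
    also have "coeff (\<Sum>r<n. C $$ (i,r) * Adj $$ (r,j)) k
       = (\<Sum>r<n. (if i = r then (if k = 0 then 0 else coeff (Adj $$ (r,j)) (k-1)) else 0) + (- (M $ en i $ en r)) * coeff (Adj $$ (r,j)) k)"
      unfolding coeff_sum
      by (rule sum.cong[OF refl]) (simp add: Centry that distrib_right coeff_X_mult coeff_const_mult del: mult_pCons_left)
    also have "\<dots> = (if k = 0 then 0 else coeff (Adj $$ (i,j)) (k-1)) - (\<Sum>r<n. M $ en i $ en r * coeff (Adj $$ (r,j)) k)"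
      using that by (simp add: sum.distrib sum_negf sum_subtractf if_distrib sum.delta cong: if_cong)
    finally show ?thesis .
  qed
  define Bk :: "nat \<Rightarrow> real^'n^'n" where "Bk k = (\<chi> x y. coeff (Adj $$ (ix x, ix y)) k)" for k
  define Bp where "Bp k = (if k = 0 then 0 else Bk (k-1))" for k
  have E: "Bp k - M ** Bk k = coeff chi k *\<^sub>R I1" for k
  proof -
    have "((Bp k - M ** Bk k) $ x) $ y = ((coeff chi k *\<^sub>R I1) $ x) $ y" for x y
    proof -
      have "((M ** Bk k) $ x) $ y = (\<Sum>r<n. M $ en (ix x) $ en r * coeff (Adj $$ (r, ix y)) k)"
        unfolding matrix_matrix_mult_def Bk_def n_def by (simp add: sum_en)
      moreover have "(Bp k $ x) $ y = (if k = 0 then 0 else coeff (Adj $$ (ix x, ix y)) (k-1))"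
        unfolding Bp_def Bk_def by simp
      ultimately have "((Bp k - M ** Bk k) $ x) $ y = (if ix x = ix y then coeff chi k else 0)"
        using centry[of "ix x" "ix y" k] by (simp add: n_def)
      then show ?thesis by (simp add: Finite_Cartesian_Product.mat_def ix_inj)
    qed
    then show ?thesis by (simp add: Finite_Cartesian_Product.vec_eq_iff)
  qed
  define D where "D = Suc (n + (\<Sum>i<n. \<Sum>j<n. degree (Adj $$ (i,j))))"
  have BkD: "Bk D = 0"
  proof -
    have "coeff (Adj $$ (i,j)) D = 0" if "i < n" "j < n" for i j
    proof -
      have "degree (Adj $$ (i,j)) \<le> (\<Sum>j<n. degree (Adj $$ (i,j)))"
        using that by (intro member_le_sum) auto
      also have "\<dots> \<le> (\<Sum>i<n. \<Sum>j<n. degree (Adj $$ (i,j)))"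
        using that by (intro member_le_sum) auto
      finally show ?thesis
        by (intro coeff_eq_0) (auto simp: D_def)
    qed
    then show ?thesis unfolding Bk_def by (simp add: Finite_Cartesian_Product.vec_eq_iff n_def)
  qed
  define g where "g k = mpow M k ** Bp k" for k
  have step: "coeff chi k *\<^sub>R mpow M k = g k - g (Suc k)" for k
  proof -
    have "coeff chi k *\<^sub>R mpow M k = mpow M k ** (coeff chi k *\<^sub>R I1)"
      by (simp add: matrix_scalar_ac)
    also have "\<dots> = mpow M k ** (Bp k - M ** Bk k)" by (simp add: E)
    also have "\<dots> = g k - g (Suc k)"
    proof -
      have "M ** mpow M k = mpow M k ** M" using mpow_Suc'[of M k] by simp
      then show ?thesis by (simp add: g_def Bp_def matrix_sub_ldistrib' matrix_mul_assoc)
    qed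
    finally show ?thesis .
  qed
  have tel: "(\<Sum>k\<le>D. coeff chi k *\<^sub>R mpow M k) = 0"
  proof -
    have "(\<Sum>k\<le>D. coeff chi k *\<^sub>R mpow M k) = (\<Sum>k\<le>D. g k - g (Suc k))"
      by (simp only: step)
    also have "\<dots> = g 0 - g (Suc D)" by (rule sum_telescope)
    also have "\<dots> = 0" by (simp add: g_def Bp_def BkD)
    finally show ?thesis .
  qed
  have deg: "degree chi = n" "coeff chi n = 1"
    using degree_monic_char_poly[OF Am] unfolding chi_def by auto
  have "(\<Sum>k\<le>D. coeff chi k *\<^sub>R mpow M k) = (\<Sum>k\<le>n. coeff chi k *\<^sub>R mpow M k)"
  proof (rule sum.mono_neutral_right)
    show "\<forall>k\<in>{..D} - {..n}. coeff chi k *\<^sub>R mpow M k = 0"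
      using deg by (auto intro: coeff_eq_0)
  qed (auto simp: D_def)
  also have "\<dots> = (\<Sum>k<n. coeff chi k *\<^sub>R mpow M k) + mpow M n"
    by (simp add: lessThan_Suc_atMost[symmetric] deg)
  finally have "mpow M n = (\<Sum>k<n. (- coeff chi k) *\<^sub>R mpow M k)"
    using tel by (simp add: sum_negf eq_neg_iff_add_eq_0 add.commute)
  then show ?thesis unfolding n_def by (intro exI[where x="\<lambda>k. - coeff chi k"])
qed


lemma poly_coeffs_in_closed_subspace:
  fixes X :: "nat \<Rightarrow> 'a::euclidean_space"
  assumes V: "subspace V"
  shows "(\<forall>t::real. (\<Sum>l\<le>d. t^l *\<^sub>R X l) \<in> V) \<Longrightarrow> \<forall>l\<le>d. X l \<in> V"
proof (induction d arbitrary: X)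
  case 0 then show ?case by auto
next
  case (Suc d)
  have cl: "closed V" using V by (rule closed_subspace)
  define q where "q t = (\<Sum>l\<le>d. t^l *\<^sub>R X (Suc l))" for t :: real
  have split: "(\<Sum>l\<le>Suc d. t^l *\<^sub>R X l) = X 0 + t *\<^sub>R q t" for t
    unfolding q_def by (subst sum.atMost_Suc_shift) (simp add: scaleR_sum_right)
  have X0: "X 0 \<in> V" using Suc.prems[rule_format, of 0] split[of 0] by simp
  have qV: "q t \<in> V" if "t \<noteq> 0" for t
  proof -
    have "X 0 + t *\<^sub>R q t \<in> V" using Suc.prems split by metis
    then have "(X 0 + t *\<^sub>R q t) - X 0 \<in> V" using subspace_diff[OF V _ X0] by blast
    then have "t *\<^sub>R q t \<in> V" by simp
    then have "(1/t) *\<^sub>R (t *\<^sub>R q t) \<in> V" by (rule subspace_scale[OF V])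
    then show ?thesis using that by simp
  qed
  have lim: "(q \<longlongrightarrow> q 0) (at 0)"
  proof -
    have "continuous_on UNIV q" unfolding q_def by (intro continuous_intros)
    then show ?thesis by (simp add: continuous_on_def)
  qed
  have ev: "eventually (\<lambda>t. q t \<in> V) (at (0::real))"
    using qV by (auto simp: eventually_at_filter)
  have "q 0 \<in> V" by (rule Lim_in_closed_set[OF cl ev _ lim]) simp
  then have "\<forall>t. q t \<in> V" using qV by metis
  then have "\<forall>l\<le>d. X (Suc l) \<in> V" using Suc.IH[of "\<lambda>l. X (Suc l)"] unfolding q_def by blast
  then show ?case using X0 by (metis Suc_le_mono not0_implies_Suc)
qed

lemma part_c:
  fixes A B :: "real^'n^'n"
  assumes "l \<le> CARD('n)"
  shows "\<exists>c :: nat \<times> nat \<Rightarrow> real.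
           symz (CARD('n) - l) l A B =
             (\<Sum>p\<in>{p. fst p + snd p < CARD('n)}. c p *\<^sub>R symz (fst p) (snd p) A B)"
proof -
  define n where "n = CARD('n)"
  define J where "J = {p::nat\<times>nat. fst p + snd p < n}"
  define Y where "Y p = symz (fst p) (snd p) A B" for p
  define V where "V = {x. \<exists>c. x = (\<Sum>p\<in>J. c p *\<^sub>R Y p)}"
  have finJ: "finite J"
  proof -
    have "J \<subseteq> {..<n} \<times> {..<n}" unfolding J_def by auto
    then show ?thesis by (rule finite_subset) simp
  qed
  have V0: "0 \<in> V" unfolding V_def by (auto intro!: exI[where x="\<lambda>_. 0"])
  have Vadd: "x + y \<in> V" if hx: "x \<in> V" and hy: "y \<in> V" for x y
  proof -
    obtain c where "x = (\<Sum>p\<in>J. c p *\<^sub>R Y p)" using hx unfolding V_def by blast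
    moreover obtain d where "y = (\<Sum>p\<in>J. d p *\<^sub>R Y p)" using hy unfolding V_def by blast
    ultimately show ?thesis unfolding V_def
      by (auto intro!: exI[where x="\<lambda>p. c p + d p"] simp: sum.distrib scaleR_add_left)
  qed
  have Vscale: "r *\<^sub>R x \<in> V" if hx: "x \<in> V" for r x
  proof -
    obtain c where "x = (\<Sum>p\<in>J. c p *\<^sub>R Y p)" using hx unfolding V_def by blast
    then show ?thesis unfolding V_def
      by (auto intro!: exI[where x="\<lambda>p. r * c p"] simp: scaleR_sum_right)
  qed
  have V: "subspace V" unfolding subspace_def using V0 Vadd Vscale by blast
  have YV: "Y q \<in> V" if "q \<in> J" for q
  proof -
    have "Y q = (\<Sum>p\<in>J. (if p = q then 1 else 0) *\<^sub>R Y p)"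
    proof -
      have "(\<Sum>p\<in>J. (if p = q then 1 else 0) *\<^sub>R Y p) = (\<Sum>p\<in>J. if p = q then Y p else 0)"
        by (rule sum.cong) auto
      then show ?thesis using that finJ by simp
    qed
    then show ?thesis unfolding V_def by (intro CollectI exI[where x="\<lambda>p. if p = q then 1 else 0"])
  qed
  have powV: "mpow (A + t *\<^sub>R B) k \<in> V" if "k < n" for t k
  proof -
    have "mpow (A + t *\<^sub>R B) k = mpow (1 *\<^sub>R A + t *\<^sub>R B) k" by simp
    also have "\<dots> = (\<Sum>l\<le>k. (1^(k-l) * t^l) *\<^sub>R Y (k-l, l))"
      unfolding expand_pow Y_def by simp
    finally show ?thesis
      using that by (auto intro!: subspace_sum[OF V] subspace_scale[OF V] YV simp: J_def)
  qed
  have "(\<Sum>l\<le>n. t^l *\<^sub>R symz (n-l) l A B) \<in> V" for t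
  proof -
    obtain c where c: "mpow (A + t *\<^sub>R B) n = (\<Sum>k<n. c k *\<^sub>R mpow (A + t *\<^sub>R B) k)"
      using cayley_hamilton_vec unfolding n_def by blast
    have "mpow (A + t *\<^sub>R B) n \<in> V"
      unfolding c by (auto intro!: subspace_sum[OF V] subspace_scale[OF V] powV)
    moreover have "mpow (A + t *\<^sub>R B) n = mpow (1 *\<^sub>R A + t *\<^sub>R B) n" by simp
    ultimately show ?thesis unfolding expand_pow by simp
  qed
  then have "\<forall>l\<le>n. symz (n-l) l A B \<in> V"
    using poly_coeffs_in_closed_subspace[OF V, where d=n and X="\<lambda>l. symz (n-l) l A B"] by blast
  then have "symz (n-l) l A B \<in> V" using assms n_def by blast
  then show ?thesis unfolding V_def J_def Y_def n_def by blast
qed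


definition S0 :: "real^'n^'n" where
  "S0 = (\<chi> x y. if x = y then real (ix x) else 0)"
definition N0 :: "real^'n^'n" where
  "N0 = (\<chi> x y. if ix x = ix y + 1 then 1 else if ix y = ix x + 1 then -1 else 0)"

lemma S0_sym: "transpose (S0::real^'n^'n) = S0"
  by (auto simp: S0_def transpose_def Finite_Cartesian_Product.vec_eq_iff)

lemma N0_skew: "transpose (N0::real^'n^'n) = - N0"
  by (auto simp: N0_def transpose_def Finite_Cartesian_Product.vec_eq_iff)

lemma S0_left: "p < CARD('n) \<Longrightarrow> ((S0 ** (M::real^'n^'n)) $ en p) $ (en q :: 'n::finite) = real p * ((M $ en p) $ en q)"
  unfolding matrix_matrix_mult_def S0_def
  by (simp add: if_distrib if_distribR sum.delta cong: if_cong)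

lemma S0_right: "q < CARD('n) \<Longrightarrow> (((M::real^'n^'n) ** S0) $ en p) $ (en q :: 'n::finite) = ((M $ en p) $ en q) * real q"
  unfolding matrix_matrix_mult_def S0_def
  by (simp add: if_distrib if_distribR sum.delta' cong: if_cong)

lemma N0_entry: "p < CARD('n) \<Longrightarrow> r < CARD('n) \<Longrightarrow>
   ((N0::real^'n::finite^'n) $ en p) $ en r = (if p = r + 1 then 1 else if r = p + 1 then -1 else 0)"
  by (simp add: N0_def)

lemma sum_two_deltas:
  fixes f :: "nat \<Rightarrow> real"
  assumes "a \<noteq> b"
  shows "(\<Sum>r<n. (if r = a then f r else if r = b then g r else 0)) = (if a < n then f a else 0) + (if b < n then g b else 0)"
proof -
  have "(\<Sum>r<n. (if r = a then f r else if r = b then g r else 0)) = (\<Sum>r<n. (if r = a then f r else 0) + (if r = b then g r else 0))"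
    by (rule sum.cong) (use assms in auto)
  then show ?thesis by (simp add: sum.distrib)
qed

lemma N0_left:
  fixes M :: "real^'n::finite^'n"
  assumes "p < CARD('n)" "q < CARD('n)"
  shows "((N0 ** M) $ en p) $ (en q :: 'n::finite) =
     (if p \<ge> 1 then (M $ en (p-1)) $ en q else 0) - (if p + 1 < CARD('n) then (M $ en (p+1)) $ en q else 0)"
proof -
  have "((N0 ** M) $ en p) $ (en q :: 'n) = (\<Sum>r<CARD('n). ((N0 $ en p) $ (en r :: 'n)) * ((M $ en r) $ en q))"
    unfolding matrix_matrix_mult_def by (simp add: sum_en)
  also have "\<dots> = (\<Sum>r<CARD('n). (if r = (if p \<ge> 1 then p - 1 else p + 2) then (if p \<ge> 1 then (M $ en r) $ en q else 0) else if r = p + 1 then - ((M $ en r) $ en q) else 0))"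
  proof (rule sum.cong[OF refl])
    fix r assume "r \<in> {..<CARD('n)}"
    then show "((N0 $ en p) $ (en r :: 'n)) * ((M $ en r) $ en q) = (if r = (if p \<ge> 1 then p - 1 else p + 2) then (if p \<ge> 1 then (M $ en r) $ en q else 0) else if r = p + 1 then - ((M $ en r) $ en q) else 0)"
      using assms \<open>r \<in> {..<CARD('n)}\<close> by (simp add: N0_entry; linarith)
  qed
  also have "\<dots> = (if p \<ge> 1 then (M $ en (p-1)) $ en q else 0) - (if p + 1 < CARD('n) then (M $ en (p+1)) $ en q else 0)"
    by (subst sum_two_deltas) (use assms in auto)
  finally show ?thesis .
qed

lemma N0_right:
  fixes M :: "real^'n::finite^'n"
  assumes "p < CARD('n)" "q < CARD('n)"
  shows "((M ** N0) $ en p) $ (en q :: 'n::finite) =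
     (if q + 1 < CARD('n) then (M $ en p) $ en (q+1) else 0) - (if q \<ge> 1 then (M $ en p) $ en (q-1) else 0)"
proof -
  have "((M ** N0) $ en p) $ (en q :: 'n) = (\<Sum>r<CARD('n). ((M $ en p) $ (en r :: 'n)) * (((N0::real^'n^'n) $ en r) $ en q))"
    unfolding matrix_matrix_mult_def by (simp add: sum_en)
  also have "\<dots> = (\<Sum>r<CARD('n). (if r = q + 1 then (M $ en p) $ en r else if r = (if q \<ge> 1 then q - 1 else q + 2) then (if q \<ge> 1 then - ((M $ en p) $ en r) else 0) else 0))"
  proof (rule sum.cong[OF refl])
    fix r assume "r \<in> {..<CARD('n)}"
    then show "((M $ en p) $ (en r :: 'n)) * (((N0::real^'n^'n) $ en r) $ en q) = (if r = q + 1 then (M $ en p) $ en r else if r = (if q \<ge> 1 then q - 1 else q + 2) then (if q \<ge> 1 then - ((M $ en p) $ en r) else 0) else 0)"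
      using assms \<open>r \<in> {..<CARD('n)}\<close> by (simp add: N0_entry; linarith)
  qed
  also have "\<dots> = (if q + 1 < CARD('n) then (M $ en p) $ en (q+1) else 0) - (if q \<ge> 1 then (M $ en p) $ en (q-1) else 0)"
    by (subst sum_two_deltas) (use assms in auto)
  finally show ?thesis .
qed

definition E :: "nat \<Rightarrow> nat \<Rightarrow> nat \<Rightarrow> nat \<Rightarrow> 'n::finite itself \<Rightarrow> real" where
  "E m l p q (_::'n itself) = ((symz m l (S0::real^'n^'n) N0) $ en p) $ (en q :: 'n)"

lemma E_left:
  assumes "p < CARD('n)" "q < CARD('n)"
  shows "E m l p q TYPE('n::finite) = (if m = 0 \<and> l = 0 then (if p = q then 1 else 0) else
     (if m > 0 then real p * E (m-1) l p q TYPE('n) else 0)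
   + (if l > 0 then (if p \<ge> 1 then E m (l-1) (p-1) q TYPE('n) else 0) - (if p + 1 < CARD('n) then E m (l-1) (p+1) q TYPE('n) else 0) else 0))"
proof (cases "m = 0 \<and> l = 0")
  case True then show ?thesis
    using assms by (simp add: E_def symz_def words_00 Finite_Cartesian_Product.mat_def en_inj)
next
  case False
  have eq: "symz m l (S0::real^'n^'n) N0 = (if m > 0 then S0 ** symz (m-1) l S0 N0 else 0) + (if l > 0 then N0 ** symz m (l-1) S0 N0 else 0)"
    using False by (subst symz_left) auto
  show ?thesis
    using False eq by (cases "m > 0"; cases "l > 0") (simp_all add: E_def S0_left N0_left assms)
qed

lemma E_right:
  assumes "p < CARD('n)" "q < CARD('n)"
  shows "E m l p q TYPE('n::finite) = (if m = 0 \<and> l = 0 then (if p = q then 1 else 0) else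
     (if m > 0 then E (m-1) l p q TYPE('n) * real q else 0)
   + (if l > 0 then (if q + 1 < CARD('n) then E m (l-1) p (q+1) TYPE('n) else 0) - (if q \<ge> 1 then E m (l-1) p (q-1) TYPE('n) else 0) else 0))"
proof (cases "m = 0 \<and> l = 0")
  case True then show ?thesis
    using assms by (simp add: E_def symz_def words_00 Finite_Cartesian_Product.mat_def en_inj)
next
  case False
  have eq: "symz m l (S0::real^'n^'n) N0 = (if m > 0 then symz (m-1) l S0 N0 ** S0 else 0) + (if l > 0 then symz m (l-1) S0 N0 ** N0 else 0)"
    using False by (subst symz_right) auto
  show ?thesis
    using False eq by (cases "m > 0"; cases "l > 0") (simp_all add: E_def S0_right N0_right assms)
qed

lemma E_band:
  "p < CARD('n) \<Longrightarrow> q < CARD('n) \<Longrightarrow> p > q + l \<Longrightarrow> E m l p q TYPE('n::finite) = 0"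
proof (induction "m + l" arbitrary: m l p rule: less_induct)
  case less
  have h1: "E (m-1) l p q TYPE('n) = 0" if "m > 0"
    by (rule less.hyps) (use less.prems that in auto)
  have h2: "E m (l-1) (p-1) q TYPE('n) = 0" if "l > 0"
    by (rule less.hyps) (use less.prems that in auto)
  have h3: "E m (l-1) (p+1) q TYPE('n) = 0" if "l > 0" "p + 1 < CARD('n)"
    by (rule less.hyps) (use less.prems that in auto)
  show ?case
    apply (subst E_left[OF less.prems(1,2)])
    using less.prems h1 h2 h3 by auto
qed


definition Dg :: "nat \<Rightarrow> nat \<Rightarrow> nat \<Rightarrow> 'n::finite itself \<Rightarrow> real" where
  "Dg m l q T = E m l (q+l) q T"

lemma Dg_L:
  assumes "q + l < CARD('n::finite)"
  shows "Dg m l q TYPE('n) = (if m = 0 \<and> l = 0 then 1 else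
      (if m > 0 then real (q+l) * Dg (m-1) l q TYPE('n) else 0) + (if l > 0 then Dg m (l-1) q TYPE('n) else 0))"
proof -
  have b: "E m (l-1) (q+l+1) q TYPE('n) = 0" if "l > 0" "q + l + 1 < CARD('n)"
    by (rule E_band) (use assms that in auto)
  have c: "q + l - 1 = q + (l - 1)" if "l > 0" using that by simp
  show ?thesis
    unfolding Dg_def
  proof -
    have e: "E m l (q+l) q TYPE('n) = (if m = 0 \<and> l = 0 then (if q + l = q then 1 else 0) else
     (if m > 0 then real (q+l) * E (m-1) l (q+l) q TYPE('n) else 0)
   + (if l > 0 then (if q + l \<ge> 1 then E m (l-1) (q+l-1) q TYPE('n) else 0) - (if q + l + 1 < CARD('n) then E m (l-1) (q+l+1) q TYPE('n) else 0) else 0))"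
      by (rule E_left) (use assms in auto)
    show "E m l (q + l) q TYPE('n) = (if m = 0 \<and> l = 0 then 1 else (if 0 < m then real (q + l) * E (m - 1) l (q + l) q TYPE('n) else 0) + (if 0 < l then E m (l - 1) (q + (l - 1)) q TYPE('n) else 0))"
    proof (cases "l > 0")
      case True
      then have "q + l \<ge> 1" by simp
      then show ?thesis using e True b[OF True] c[OF True] by (cases "q + l + 1 < CARD('n)") simp_all
    next
      case False
      then show ?thesis using e by simp
    qed
  qed
qed

lemma Dg_R:
  assumes "q + l < CARD('n::finite)"
  shows "Dg m l q TYPE('n) = (if m = 0 \<and> l = 0 then 1 else
      (if m > 0 then Dg (m-1) l q TYPE('n) * real q else 0) + (if l > 0 then Dg m (l-1) (q+1) TYPE('n) else 0))"
proof -
  have b: "E m (l-1) (q+l) (q-1) TYPE('n) = 0" if "l > 0" "q \<ge> 1"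
    by (rule E_band) (use assms that in auto)
  have c: "q + l = Suc q + (l - 1)" if "l > 0" using that by simp
  show ?thesis
    unfolding Dg_def
  proof -
    have e: "E m l (q+l) q TYPE('n) = (if m = 0 \<and> l = 0 then (if q + l = q then 1 else 0) else
     (if m > 0 then E (m-1) l (q+l) q TYPE('n) * real q else 0)
   + (if l > 0 then (if q + 1 < CARD('n) then E m (l-1) (q+l) (q+1) TYPE('n) else 0) - (if q \<ge> 1 then E m (l-1) (q+l) (q-1) TYPE('n) else 0) else 0))"
      by (rule E_right) (use assms in auto)
    show "E m l (q + l) q TYPE('n) = (if m = 0 \<and> l = 0 then 1 else (if 0 < m then E (m - 1) l (q + l) q TYPE('n) * real q else 0) + (if 0 < l then E m (l - 1) (q + 1 + (l - 1)) (q + 1) TYPE('n) else 0))"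
    proof (cases "l > 0")
      case True
      then have "q + 1 < CARD('n)" using assms by simp
      moreover have "q + 1 + (l - 1) = q + l" using True by simp
      ultimately show ?thesis using e True b[OF True] by (cases "q \<ge> 1") simp_all
    next
      case False
      then show ?thesis using e by simp
    qed
  qed
qed

lemma Dg_0: "q + l < CARD('n::finite) \<Longrightarrow> Dg 0 l q TYPE('n) = 1"
  by (induction l) (subst Dg_L; simp)+

lemma Dg_diff:
  assumes "q + l + 1 < CARD('n::finite)" "m > 0"
  shows "Dg m l (q+1) TYPE('n) - Dg m l q TYPE('n) = real (l+1) * Dg (m-1) (l+1) q TYPE('n)"
proof -
  have L: "Dg m (l+1) q TYPE('n) = real (q+l+1) * Dg (m-1) (l+1) q TYPE('n) + Dg m l q TYPE('n)"
    using assms by (subst Dg_L) auto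
  have R: "Dg m (l+1) q TYPE('n) = Dg (m-1) (l+1) q TYPE('n) * real q + Dg m l (q+1) TYPE('n)"
    using assms by (subst Dg_R) auto
  from L R show ?thesis by (simp add: algebra_simps)
qed

lemma Dg_claim:
  "\<forall>l c. l + d < CARD('n::finite) \<longrightarrow> (\<forall>q\<le>d. (\<Sum>m\<le>d. c m * Dg m l q TYPE('n)) = 0) \<longrightarrow> (\<forall>m\<le>d. c m = (0::real))"
proof (induction d)
  case 0 then show ?case by (auto simp: Dg_0)
next
  case (Suc d)
  show ?case
  proof (rule allI, rule allI, rule impI, rule impI)
    fix l and c :: "nat \<Rightarrow> real"
    assume ld: "l + Suc d < CARD('n)" and eqs: "\<forall>q\<le>Suc d. (\<Sum>m\<le>Suc d. c m * Dg m l q TYPE('n)) = 0"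
    have split: "(\<Sum>m\<le>Suc d. c m * Dg m l q TYPE('n)) = c 0 + (\<Sum>m\<le>d. c (Suc m) * Dg (Suc m) l q TYPE('n))" if "q \<le> Suc d" for q
      using that ld by (subst sum.atMost_Suc_shift) (simp add: Dg_0)
    have diffs: "(\<Sum>m\<le>d. c (Suc m) * Dg m (l+1) q TYPE('n)) = 0" if "q \<le> d" for q
    proof -
      have "(\<Sum>m\<le>Suc d. c m * Dg m l (q+1) TYPE('n)) - (\<Sum>m\<le>Suc d. c m * Dg m l q TYPE('n)) = 0"
        using eqs that by simp
      then have "(\<Sum>m\<le>d. c (Suc m) * (Dg (Suc m) l (q+1) TYPE('n) - Dg (Suc m) l q TYPE('n))) = 0"
        using split[of q] split[of "q+1"] that by (simp add: sum_subtractf algebra_simps)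
      moreover have "Dg (Suc m) l (q+1) TYPE('n) - Dg (Suc m) l q TYPE('n) = real (l+1) * Dg m (l+1) q TYPE('n)" for m
        using Dg_diff[where 'n='n, of q l "Suc m"] that ld by simp
      ultimately have "real (l+1) * (\<Sum>m\<le>d. c (Suc m) * Dg m (l+1) q TYPE('n)) = 0"
        by (simp add: sum_distrib_left algebra_simps)
      then show ?thesis by simp
    qed
    have "\<forall>m\<le>d. c (Suc m) = 0"
      using Suc.IH[rule_format, of "l+1" "\<lambda>m. c (Suc m)"] ld diffs by simp
    moreover have "c 0 = 0"
    proof -
      have "(\<Sum>m\<le>Suc d. c m * Dg m l 0 TYPE('n)) = 0" using eqs by simp
      then show ?thesis using split[of 0] \<open>\<forall>m\<le>d. c (Suc m) = 0\<close> by simp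
    qed
    ultimately show "\<forall>m\<le>Suc d. c m = 0" by (metis Suc_le_mono not0_implies_Suc)
  qed
qed


lemma finite_low_index: "finite (low_index n)"
proof -
  have "low_index n \<subseteq> {..n} \<times> {..n}" unfolding low_index_def by auto
  then show ?thesis by (rule finite_subset) simp
qed

lemma witness_indep:
  "lin_indep_family (low_index CARD('n)) (\<lambda>(k, l). symz (k - l) l (S0::real^'n::finite^'n) N0)"
  unfolding lin_indep_family_def
proof (intro allI impI)
  fix c :: "nat \<times> nat \<Rightarrow> real"
  define n where "n = CARD('n)"
  define I where "I = low_index n"
  assume "(\<Sum>i\<in>low_index CARD('n). c i *\<^sub>R (case i of (k, l) \<Rightarrow> symz (k - l) l (S0::real^'n^'n) N0)) = 0"
  then have Z: "(\<Sum>i\<in>I. c i *\<^sub>R symz (fst i - snd i) (snd i) (S0::real^'n^'n) N0) = 0"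
    unfolding I_def n_def by (simp add: case_prod_beta)
  have finI: "finite I" unfolding I_def by (rule finite_low_index)
  have npos: "n > 0" unfolding n_def by simp
  have key: "\<forall>k. l \<le> k \<and> k \<le> n - 1 \<longrightarrow> c (k, l) = 0" if "l \<le> n - 1" for l
    using that
  proof (induction "n - 1 - l" arbitrary: l rule: less_induct)
    case less
    define d where "d = n - 1 - l"
    have IH: "c i = 0" if "i \<in> I" "snd i > l" for i
    proof -
      obtain k l' where i: "i = (k, l')" by (cases i)
      have "l' \<le> n - 1" "l' \<le> k" "k \<le> n - 1" using that i unfolding I_def low_index_def by auto
      moreover have "n - 1 - l' < n - 1 - l" using that i \<open>l' \<le> n - 1\<close> by simp
      ultimately show ?thesis using less.hyps[of l'] i by blast
    qed
    have eqs: "(\<Sum>m\<le>d. c (m + l, l) * Dg m l q TYPE('n)) = 0" if "q \<le> d" for q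
    proof -
      have ql: "q + l < n" using that less.prems npos unfolding d_def by simp
      have "((\<Sum>i\<in>I. c i *\<^sub>R symz (fst i - snd i) (snd i) (S0::real^'n^'n) N0) $ en (q+l)) $ en q = 0"
        using Z by simp
      then have "(\<Sum>i\<in>I. c i * E (fst i - snd i) (snd i) (q+l) q TYPE('n)) = 0"
        by (simp add: E_def)
      moreover have "(\<Sum>i\<in>I. c i * E (fst i - snd i) (snd i) (q+l) q TYPE('n))
          = (\<Sum>i\<in>(\<lambda>m. (m + l, l)) ` {..d}. c i * E (fst i - snd i) (snd i) (q+l) q TYPE('n))"
      proof (rule sum.mono_neutral_right[OF finI])
        show "(\<lambda>m. (m + l, l)) ` {..d} \<subseteq> I"
          using less.prems unfolding I_def low_index_def d_def by auto
        show "\<forall>i\<in>I - (\<lambda>m. (m + l, l)) ` {..d}. c i * E (fst i - snd i) (snd i) (q + l) q TYPE('n) = 0"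
        proof
          fix i assume iI: "i \<in> I - (\<lambda>m. (m + l, l)) ` {..d}"
          obtain k l' where i: "i = (k, l')" by (cases i)
          have kl: "l' \<le> k" "k \<le> n - 1" using iI i unfolding I_def low_index_def by auto
          consider "l' > l" | "l' < l" | "l' = l" by linarith
          then show "c i * E (fst i - snd i) (snd i) (q + l) q TYPE('n) = 0"
          proof cases
            case 1 then show ?thesis using IH[of i] iI i by simp
          next
            case 2
            have "E (k - l') l' (q + l) q TYPE('n) = 0"
              by (rule E_band) (use ql 2 in \<open>auto simp: n_def\<close>)
            then show ?thesis using i by simp
          next
            case 3
            then have "i = ((k - l) + l, l)" "k - l \<le> d" using i kl unfolding d_def by auto
            then show ?thesis using iI by blast
          qed
        qed
      qed
      moreover have "(\<Sum>i\<in>(\<lambda>m. (m + l, l)) ` {..d}. c i * E (fst i - snd i) (snd i) (q+l) q TYPE('n))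
          = (\<Sum>m\<le>d. c (m + l, l) * Dg m l q TYPE('n))"
        by (subst sum.reindex) (auto simp: inj_on_def Dg_def)
      ultimately show ?thesis by simp
    qed
    have "l + d < n" using less.prems npos unfolding d_def by linarith
    then have "l + d < CARD('n)" unfolding n_def .
    then have "\<forall>m\<le>d. c (m + l, l) = 0"
      using Dg_claim[where 'n='n, of d, rule_format, of l "\<lambda>m. c (m + l, l)"] eqs by blast
    then show ?case unfolding d_def
      by (metis le_add_diff_inverse2 diff_le_mono)
  qed
  show "\<forall>i\<in>low_index CARD('n). c i = 0"
  proof
    fix i assume "i \<in> low_index CARD('n)"
    then obtain k l where "i = (k, l)" "l \<le> k" "k \<le> n - 1" unfolding low_index_def n_def by auto
    then show "c i = 0" using key[of l] by simp
  qed
qed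


inductive pf :: "(((real^'n^'n) \<times> (real^'n^'n)) \<Rightarrow> real) \<Rightarrow> bool" where
  pf_const: "pf (\<lambda>x. c)"
| pf_fst: "pf (\<lambda>x. (fst x $ i) $ j)"
| pf_snd: "pf (\<lambda>x. (snd x $ i) $ j)"
| pf_add: "pf f \<Longrightarrow> pf g \<Longrightarrow> pf (\<lambda>x. f x + g x)"
| pf_mult: "pf f \<Longrightarrow> pf g \<Longrightarrow> pf (\<lambda>x. f x * g x)"

lemma pf_sum: "finite S \<Longrightarrow> (\<And>s. s \<in> S \<Longrightarrow> pf (f s)) \<Longrightarrow> pf (\<lambda>x. \<Sum>s\<in>S. f s x)"
proof (induction S rule: finite_induct)
  case empty then show ?case using pf_const[of 0] by simp
next
  case (insert a S) then show ?case by (simp add: pf_add)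
qed

lemma pf_prod: "finite S \<Longrightarrow> (\<And>s. s \<in> S \<Longrightarrow> pf (f s)) \<Longrightarrow> pf (\<lambda>x. \<Prod>s\<in>S. f s x)"
proof (induction S rule: finite_induct)
  case empty then show ?case using pf_const[of 1] by simp
next
  case (insert a S) then show ?case by (simp add: pf_mult)
qed

lemma pf_cont: "pf f \<Longrightarrow> continuous_on UNIV f"
proof (induction rule: pf.induct)
  case (pf_fst i j) then show ?case by (intro continuous_intros)
next
  case (pf_snd i j) then show ?case by (intro continuous_intros)
qed (auto intro: continuous_intros)

lemma pf_line: "pf f \<Longrightarrow> \<exists>p. \<forall>t. f (x + t *\<^sub>R (y - x)) = poly p t"
proof (induction rule: pf.induct)
  case (pf_const c) then show ?case by (intro exI[where x="[:c:]"]) simp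
next
  case (pf_fst i j)
  show ?case
    by (intro exI[where x="[:(fst x $ i) $ j, (fst y $ i) $ j - (fst x $ i) $ j:]"]) (simp add: algebra_simps)
next
  case (pf_snd i j)
  show ?case
    by (intro exI[where x="[:(snd x $ i) $ j, (snd y $ i) $ j - (snd x $ i) $ j:]"]) (simp add: algebra_simps)
next
  case (pf_add f g)
  then obtain p q where "\<forall>t. f (x + t *\<^sub>R (y - x)) = poly p t" "\<forall>t. g (x + t *\<^sub>R (y - x)) = poly q t" by blast
  then show ?case by (intro exI[where x="p + q"]) simp
next
  case (pf_mult f g)
  then obtain p q where "\<forall>t. f (x + t *\<^sub>R (y - x)) = poly p t" "\<forall>t. g (x + t *\<^sub>R (y - x)) = poly q t" by blast
  then show ?case by (intro exI[where x="p * q"]) simp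
qed

lemma pf_word_mat: "pf (\<lambda>x. (word_mat (fst x) (snd x) w $ i) $ j)"
proof (induction w arbitrary: i)
  case Nil then show ?case by (simp add: pf_const)
next
  case (Cons b w)
  have "pf (\<lambda>x. \<Sum>k\<in>UNIV. ((if b then snd x else fst x) $ i) $ k * (word_mat (fst x) (snd x) w $ k) $ j)"
    by (intro pf_sum pf_mult Cons) (cases b; auto intro: pf_fst pf_snd)+
  then show ?case by (simp add: matrix_matrix_mult_def)
qed

lemma pf_symz: "pf (\<lambda>x. (symz a b (fst x) (snd x) $ i) $ j)"
  unfolding symz_def by (simp add: pf_sum pf_word_mat)

lemma inner_mat: "inner (X::real^'n^'n) Y = (\<Sum>i\<in>UNIV. \<Sum>j\<in>UNIV. (X $ i) $ j * (Y $ i) $ j)"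
  by (simp add: inner_vec_def)

lemma pf_inner_symz: "pf (\<lambda>x. inner (symz a b (fst x) (snd x)) (symz a' b' (fst x) (snd x)))"
  unfolding inner_mat by (intro pf_sum pf_mult pf_symz) auto

lemma pf_dense:
  fixes f :: "((real^'n^'n) \<times> (real^'n^'n)) \<Rightarrow> real"
  assumes "pf f" "f w \<noteq> 0" "e > 0"
  shows "\<exists>t. 0 < t \<and> t < 1 \<and> dist (z + t *\<^sub>R (w - z)) z < e \<and> f (z + t *\<^sub>R (w - z)) \<noteq> 0"
proof -
  obtain p where p: "\<forall>t. f (z + t *\<^sub>R (w - z)) = poly p t" using pf_line[OF assms(1)] by blast
  have "poly p 1 \<noteq> 0" using p[rule_format, of 1] assms(2) by simp
  then have "p \<noteq> 0" by auto
  then have fin: "finite {t. poly p t = 0}" by (rule poly_roots_finite)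
  define \<delta> where "\<delta> = min 1 (e / (norm (w - z) + 1))"
  have np: "norm (w - z) + 1 > 0" by (simp add: add_nonneg_pos)
  then have d0: "\<delta> > 0" unfolding \<delta>_def using assms(3) by simp
  have "infinite {0<..<\<delta>}" using d0 by simp
  then have "infinite ({0<..<\<delta>} - {t. poly p t = 0})" using fin by (rule Diff_infinite_finite[rotated])
  then have "({0<..<\<delta>} - {t. poly p t = 0}) \<noteq> {}" by (metis finite.emptyI)
  then obtain t where "t \<in> {0<..<\<delta>} - {t. poly p t = 0}" by blast
  then have t: "0 < t" "t < \<delta>" "poly p t \<noteq> 0" by auto
  have "dist (z + t *\<^sub>R (w - z)) z = t * norm (w - z)"
    using t by (simp add: dist_norm)
  also have "\<dots> \<le> t * (norm (w - z) + 1)" using t(1) by (simp add: distrib_left)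
  also have "\<dots> < \<delta> * (norm (w - z) + 1)" using t(2) np by (rule mult_strict_right_mono)
  also have "\<dots> \<le> e"
  proof -
    have "\<delta> \<le> e / (norm (w - z) + 1)" unfolding \<delta>_def by simp
    then show ?thesis using np by (simp add: pos_le_divide_eq)
  qed
  finally have "dist (z + t *\<^sub>R (w - z)) z < e" .
  moreover have "t < 1" using t(2) unfolding \<delta>_def by simp
  moreover have "f (z + t *\<^sub>R (w - z)) \<noteq> 0" using t(3) p by simp
  ultimately show ?thesis using t(1) by blast
qed


lemma gram_indep:
  fixes F :: "'i \<Rightarrow> 'v::real_inner"
  assumes bij: "bij_betw \<iota> {0..<m} I"
  shows "Determinant.det (Matrix.mat m m (\<lambda>(a,b). inner (F (\<iota> a)) (F (\<iota> b)))) \<noteq> 0 \<longleftrightarrow> lin_indep_family I F"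
proof -
  define G where "G = Matrix.mat m m (\<lambda>(a,b). inner (F (\<iota> a)) (F (\<iota> b)))"
  have G: "G \<in> carrier_mat m m" unfolding G_def by simp
  define W where "W v = (\<Sum>b\<in>{0..<m}. (v $ b) *\<^sub>R F (\<iota> b))" for v :: "real Matrix.vec"
  have Gv: "(G *\<^sub>v v) $ a = inner (F (\<iota> a)) (W v)" if "a < m" "v \<in> carrier_vec m" for a v
    using that unfolding G_def W_def
    by (simp add: scalar_prod_def inner_sum_right mult.commute)
  have reidx: "(\<Sum>i\<in>I. c i *\<^sub>R F i) = (\<Sum>b\<in>{0..<m}. c (\<iota> b) *\<^sub>R F (\<iota> b))" for c
    using sum.reindex_bij_betw[OF bij, of "\<lambda>i. c i *\<^sub>R F i"] by simp
  have inv1: "\<iota> (inv_into {0..<m} \<iota> i) = i" if "i \<in> I" for i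
    using bij that by (simp add: bij_betw_inv_into_right)
  have inv2: "inv_into {0..<m} \<iota> i < m" if "i \<in> I" for i
    using bij that by (metis atLeastLessThan_iff bij_betw_def inv_into_into)
  have inv3: "inv_into {0..<m} \<iota> (\<iota> b) = b" if "b < m" for b
    using bij that by (simp add: bij_betw_inv_into_left)
  show ?thesis
  proof
    assume d: "Determinant.det (Matrix.mat m m (\<lambda>(a,b). inner (F (\<iota> a)) (F (\<iota> b)))) \<noteq> 0"
    show "lin_indep_family I F"
      unfolding lin_indep_family_def
    proof (intro allI impI ballI, rule ccontr)
      fix c i assume z: "(\<Sum>i\<in>I. c i *\<^sub>R F i) = 0" and iI: "i \<in> I" and ci: "c i \<noteq> 0"
      define v where "v = Matrix.vec m (\<lambda>b. c (\<iota> b))"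
      have vc: "v \<in> carrier_vec m" unfolding v_def by simp
      have Wv: "W v = 0" unfolding W_def v_def using z reidx[of c] by simp
      have "v $ (inv_into {0..<m} \<iota> i) = c i" unfolding v_def using inv1[OF iI] inv2[OF iI] by simp
      then have "v \<noteq> 0\<^sub>v m" using ci inv2[OF iI] by auto
      moreover have "G *\<^sub>v v = 0\<^sub>v m"
        by (rule eq_vecI) (use G vc Gv Wv in auto)
      ultimately have "Determinant.det G = 0"
        using det_0_iff_vec_prod_zero_field[OF G] vc by blast
      then show False using d unfolding G_def by simp
    qed
  next
    assume ind: "lin_indep_family I F"
    show "Determinant.det (Matrix.mat m m (\<lambda>(a,b). inner (F (\<iota> a)) (F (\<iota> b)))) \<noteq> 0"
    proof
      assume "Determinant.det (Matrix.mat m m (\<lambda>(a,b). inner (F (\<iota> a)) (F (\<iota> b)))) = 0"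
      then obtain v where vc: "v \<in> carrier_vec m" and v0: "v \<noteq> 0\<^sub>v m" and Gv0: "G *\<^sub>v v = 0\<^sub>v m"
        using det_0_iff_vec_prod_zero_field[OF G] unfolding G_def by blast
      have orth: "inner (F (\<iota> a)) (W v) = 0" if "a < m" for a
        using Gv[OF that vc] Gv0 that by simp
      have "inner (W v) (W v) = (\<Sum>b\<in>{0..<m}. (v $ b) * inner (F (\<iota> b)) (W v))"
        unfolding W_def[of v] by (simp add: inner_sum_left)
      also have "\<dots> = 0" using orth by simp
      finally have W0: "W v = 0" by simp
      define c where "c i = v $ (inv_into {0..<m} \<iota> i)" for i
      have "(\<Sum>i\<in>I. c i *\<^sub>R F i) = W v"
        unfolding reidx W_def c_def by (rule sum.cong) (auto simp: inv3)
      then have "\<forall>i\<in>I. c i = 0" using ind W0 unfolding lin_indep_family_def by metis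
      then have "v $ b = 0" if "b < m" for b
        using that bij inv3[OF that] unfolding c_def by (metis atLeastLessThan_iff bij_betwE zero_le)
      then have "v = 0\<^sub>v m" using vc by (intro eq_vecI) auto
      then show False using v0 by simp
    qed
  qed
qed


lemma transpose_scaleR': "transpose (c *\<^sub>R (A::real^'n^'m)) = c *\<^sub>R transpose A"
  by (vector transpose_def)
lemma transpose_diff': "transpose (A - (B::real^'n^'m)) = transpose A - transpose B"
  by (vector transpose_def)

lemma ssp_line:
  assumes "z \<in> sym_skew_pairs" "w \<in> sym_skew_pairs"
  shows "z + t *\<^sub>R (w - z) \<in> (sym_skew_pairs :: ((real^'n^'n) \<times> (real^'n^'n)) set)"
proof -
  obtain A B where z: "z = (A,B)" by (cases z)
  obtain C D where w: "w = (C,D)" by (cases w)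
  have h: "transpose A = A" "transpose B = -B" "transpose C = C" "transpose D = -D"
    using assms z w by (auto simp: sym_skew_pairs_def)
  have "transpose (A + t *\<^sub>R (C - A)) = A + t *\<^sub>R (C - A)"
    using h by (simp add: transpose_add' transpose_scaleR' transpose_diff')
  moreover have "transpose (B + t *\<^sub>R (D - B)) = - (B + t *\<^sub>R (D - B))"
    using h by (simp add: transpose_add' transpose_scaleR' transpose_diff' algebra_simps)
  ultimately show ?thesis using z w by (simp add: sym_skew_pairs_def)
qed

lemma part_d:
  shows "(\<exists>U :: ((real^'n^'n) \<times> (real^'n^'n)) set. open U \<and> closure U = UNIV \<and>
           (\<forall>(P, Q)\<in>U. lin_indep_family (low_index CARD('n))
                           (\<lambda>(k, l). symz (k - l) l P Q)))
    \<and> (\<exists>U :: ((real^'n^'n) \<times> (real^'n^'n)) set. U \<subseteq> sym_skew_pairs \<and>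
           openin (top_of_set sym_skew_pairs) U \<and> sym_skew_pairs \<subseteq> closure U \<and>
           (\<forall>(P, Q)\<in>U. lin_indep_family (low_index CARD('n))
                           (\<lambda>(k, l). symz (k - l) l P Q)))"
proof -
  define I where "I = low_index CARD('n)"
  define m where "m = card I"
  obtain \<iota> where bij: "bij_betw \<iota> {0..<m} I"
    using ex_bij_betw_nat_finite[OF finite_low_index[of "CARD('n)"]] unfolding m_def I_def by blast
  define fam :: "((real^'n^'n) \<times> (real^'n^'n)) \<Rightarrow> nat \<times> nat \<Rightarrow> real^'n^'n" where
    "fam x i = symz (fst i - snd i) (snd i) (fst x) (snd x)" for x i
  define gd where "gd x = Determinant.det (Matrix.mat m m (\<lambda>(a,b). inner (fam x (\<iota> a)) (fam x (\<iota> b))))" for x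
  have fam_eq: "(\<lambda>(k, l). symz (k - l) l P Q) = fam (P, Q)" for P Q
    by (auto simp: fam_def fun_eq_iff)
  have gd_iff: "gd x \<noteq> 0 \<longleftrightarrow> lin_indep_family I (fam x)" for x
    unfolding gd_def by (rule gram_indep[OF bij])
  have gd_expr: "gd x = (\<Sum>p\<in>{p. p permutes {0..<m}}. signof p * (\<Prod>i\<in>{0..<m}. inner (fam x (\<iota> i)) (fam x (\<iota> (p i)))))" for x
    unfolding gd_def
    apply (subst det_def'[where n=m])
     apply simp
    apply (rule sum.cong[OF refl])
    apply (rule arg_cong[where f="\<lambda>y. _ * y"])
    apply (rule prod.cong[OF refl])
    apply (auto simp: permutes_in_image)
    done
  have pf_gd: "pf gd"
  proof -
    have "pf (\<lambda>x. \<Sum>p\<in>{p. p permutes {0..<m}}. signof p * (\<Prod>i\<in>{0..<m}. inner (fam x (\<iota> i)) (fam x (\<iota> (p i)))))"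
      unfolding fam_def
      by (intro pf_sum pf_mult pf_const pf_prod pf_inner_symz) (auto simp: finite_permutations)
    then show ?thesis unfolding gd_expr[abs_def] .
  qed
  define w :: "(real^'n^'n) \<times> (real^'n^'n)" where "w = (S0, N0)"
  have w_ssp: "w \<in> sym_skew_pairs" unfolding w_def sym_skew_pairs_def using S0_sym N0_skew by simp
  have fw: "fam w = (\<lambda>(k, l). symz (k - l) l S0 N0)" unfolding w_def by (rule fam_eq[symmetric])
  have gdw: "gd w \<noteq> 0"
    unfolding gd_iff fw I_def by (rule witness_indep)
  define U where "U = {x. gd x \<noteq> 0}"
  have openU: "open U"
    unfolding U_def by (rule open_Collect_neq) (use pf_cont[OF pf_gd] in \<open>auto intro: continuous_intros\<close>)
  have approx: "\<exists>y\<in>U. dist y z < e \<and> (z \<in> sym_skew_pairs \<longrightarrow> y \<in> sym_skew_pairs)" if e0: "e > 0" for z e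
  proof -
    obtain t where t: "dist (z + t *\<^sub>R (w - z)) z < e" "gd (z + t *\<^sub>R (w - z)) \<noteq> 0"
      using pf_dense[OF pf_gd gdw e0, of z] by blast
    show ?thesis
      using t ssp_line[OF _ w_ssp, of z t] unfolding U_def by blast
  qed
  have indU: "\<forall>(P, Q)\<in>U. lin_indep_family (low_index CARD('n)) (\<lambda>(k, l). symz (k - l) l P Q)"
    unfolding U_def using gd_iff fam_eq I_def by auto
  have "z \<in> closure U" for z
    unfolding closure_approachable using approx by blast
  then have "closure U = UNIV" by blast
  then have d1: "\<exists>U :: ((real^'n^'n) \<times> (real^'n^'n)) set. open U \<and> closure U = UNIV \<and>
           (\<forall>(P, Q)\<in>U. lin_indep_family (low_index CARD('n)) (\<lambda>(k, l). symz (k - l) l P Q))"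
    using openU indU by blast
  define U' where "U' = sym_skew_pairs \<inter> U"
  have "(sym_skew_pairs :: ((real^'n^'n) \<times> (real^'n^'n)) set) \<subseteq> closure U'"
  proof
    fix z :: "(real^'n^'n) \<times> (real^'n^'n)" assume "z \<in> sym_skew_pairs"
    then show "z \<in> closure U'"
      unfolding closure_approachable U'_def using approx by blast
  qed
  moreover have "openin (top_of_set sym_skew_pairs) U'" unfolding U'_def using openU by blast
  moreover have "\<forall>(P, Q)\<in>U'. lin_indep_family (low_index CARD('n)) (\<lambda>(k, l). symz (k - l) l P Q)"
    using indU unfolding U'_def by blast
  ultimately have d2: "\<exists>U :: ((real^'n^'n) \<times> (real^'n^'n)) set. U \<subseteq> sym_skew_pairs \<and>
           openin (top_of_set sym_skew_pairs) U \<and> sym_skew_pairs \<subseteq> closure U \<and>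
           (\<forall>(P, Q)\<in>U. lin_indep_family (low_index CARD('n)) (\<lambda>(k, l). symz (k - l) l P Q))"
    unfolding U'_def by blast
  show ?thesis using d1 d2 by blast
qed

theorem lemma4p1:
  fixes A B :: "real^'n^'n"
  shows "(\<forall>i j. commutator (symz i (j+1) A B) A + commutator (symz (i+1) j A B) B = 0)
    \<and> (\<forall>(S::real^'n^'n) (N::real^'n^'n). transpose S = S \<and> transpose N = - N \<longrightarrow>
           (\<forall>i j. transpose (symz i j S N) = (if even j then symz i j S N else - symz i j S N)))
    \<and> (\<forall>l\<le>CARD('n). \<exists>c :: nat \<times> nat \<Rightarrow> real.
           symz (CARD('n) - l) l A B =
             (\<Sum>p\<in>{p. fst p + snd p < CARD('n)}. c p *\<^sub>R symz (fst p) (snd p) A B))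
    \<and> (\<exists>U :: ((real^'n^'n) \<times> (real^'n^'n)) set. open U \<and> closure U = UNIV \<and>
           (\<forall>(P, Q)\<in>U. lin_indep_family (low_index CARD('n))
                           (\<lambda>(k, l). symz (k - l) l P Q)))
    \<and> (\<exists>U :: ((real^'n^'n) \<times> (real^'n^'n)) set. U \<subseteq> sym_skew_pairs \<and>
           openin (top_of_set sym_skew_pairs) U \<and> sym_skew_pairs \<subseteq> closure U \<and>
           (\<forall>(P, Q)\<in>U. lin_indep_family (low_index CARD('n))
                           (\<lambda>(k, l). symz (k - l) l P Q)))"
  apply (intro conjI)
  subgoal using part_a by blast
  subgoal using part_b by blast
  subgoal using part_c by blast
  subgoal using part_d by (rule conjunct1)
  subgoal using part_d by (rule conjunct2)
  done


end
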